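(* Let $q\ge3$ be a prime power and let $\ell_0,\ell_1,\dots$ be integers with $0\le\ell_i\le q-2$. Let $P_0=[0,\ell_0]\subseteq\mathbb{R}$ and $P_i=P_{i-1}\oplus[0,\ell_i]\subseteq\mathbb{R}^{i+1}$ for $i\ge1$. Then $R(P_i)\to0$ as $i\to\infty$.
   Context: The direct sum of integral convex polytopes $P\subseteq\mathbb{R}^n$ and $Q\subseteq\mathbb{R}^m$ both containing the origin is $P\oplus Q=\mathrm{conv}\big(\{(p,\mathbf{0}):p\in P\}\cup\{(\mathbf{0},y):y\in Q\}\big)\subseteq\mathbb{R}^{n+m}$. For an integral convex polytope $P\subseteq[0,q-2]^n$, $R(P)=|P\cap\mathbb{Z}^n|/(q-1)^n$. *)

theory Defs
  imports "HOL-Analysis.Analysis" "HOL-Number_Theory.Number_Theory"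
begin

text \<open>Points of R^n are represented as functions nat => real whose coordinates
  with index >= n vanish; a subset of R^n is a set of such functions.\<close>

definition in_dim :: "nat \<Rightarrow> (nat \<Rightarrow> real) \<Rightarrow> bool" where
  "in_dim n x \<longleftrightarrow> (\<forall>k\<ge>n. x k = 0)"

definition conv :: "(nat \<Rightarrow> real) set \<Rightarrow> (nat \<Rightarrow> real) set" where
  "conv S = {y. \<exists>F u. finite F \<and> F \<subseteq> S \<and> (\<forall>x\<in>F. 0 \<le> u x) \<and> sum u F = 1
                  \<and> y = (\<lambda>k. \<Sum>x\<in>F. u x * x k)}"

definition shift :: "nat \<Rightarrow> (nat \<Rightarrow> real) \<Rightarrow> (nat \<Rightarrow> real)" where
  "shift n y = (\<lambda>k. if k < n then 0 else y (k - n))"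

definition dsum :: "nat \<Rightarrow> (nat \<Rightarrow> real) set \<Rightarrow> (nat \<Rightarrow> real) set \<Rightarrow> (nat \<Rightarrow> real) set" where
  "dsum n P Q = conv (P \<union> shift n ` Q)"

definition seg :: "int \<Rightarrow> (nat \<Rightarrow> real) set" where
  "seg l = {x. 0 \<le> x 0 \<and> x 0 \<le> real_of_int l \<and> in_dim 1 x}"

fun Pseq :: "(nat \<Rightarrow> int) \<Rightarrow> nat \<Rightarrow> (nat \<Rightarrow> real) set" where
  "Pseq l 0 = seg (l 0)"
| "Pseq l (Suc i) = dsum (Suc i) (Pseq l i) (seg (l (Suc i)))"

definition lattice_points :: "nat \<Rightarrow> (nat \<Rightarrow> real) set \<Rightarrow> (nat \<Rightarrow> real) set" where
  "lattice_points n P = {x\<in>P. in_dim n x \<and> (\<forall>k<n. x k \<in> \<int>)}"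

definition Rval :: "nat \<Rightarrow> nat \<Rightarrow> (nat \<Rightarrow> real) set \<Rightarrow> real" where
  "Rval q n P = real (card (lattice_points n P)) / (real q - 1) ^ n"

end

theory Submission
  imports Defs "HOL-Real_Asymp.Real_Asymp"
begin

definition Cset :: "nat \<Rightarrow> real \<Rightarrow> (nat \<Rightarrow> real) set" where
  "Cset n m = {x. in_dim n x \<and> (\<forall>k. 0 \<le> x k) \<and> (\<Sum>k<n. x k) \<le> m}"

lemma conv_sub:
  assumes "S \<subseteq> Cset n m" shows "conv S \<subseteq> Cset n m"
proof
  fix y assume "y \<in> conv S"
  then obtain F u where F: "finite F" "F \<subseteq> S" "\<forall>x\<in>F. 0 \<le> u x" "sum u F = 1"
    and y: "y = (\<lambda>k. \<Sum>x\<in>F. u x * x k)" unfolding conv_def by blast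
  have xC: "x \<in> Cset n m" if "x \<in> F" for x using F(2) assms that by blast
  have "in_dim n y" unfolding in_dim_def y
    using xC by (auto simp: Cset_def in_dim_def intro!: sum.neutral)
  moreover have "\<forall>k. 0 \<le> y k" unfolding y
    using xC F(3) by (auto simp: Cset_def intro!: sum_nonneg)
  moreover have "(\<Sum>k<n. y k) \<le> m"
  proof -
    have "(\<Sum>k<n. y k) = (\<Sum>x\<in>F. u x * (\<Sum>k<n. x k))"
      unfolding y by (simp add: sum.swap[of _ "{..<n}"] sum_distrib_left)
    also have "\<dots> \<le> (\<Sum>x\<in>F. u x * m)"
      using xC F(3) by (intro sum_mono mult_left_mono) (auto simp: Cset_def)
    also have "\<dots> = m" using F(4) by (simp add: sum_distrib_right[symmetric])
    finally show ?thesis .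
  qed
  ultimately show "y \<in> Cset n m" by (simp add: Cset_def)
qed

lemma Cset_mono: "Cset (Suc n) m \<subseteq> Cset (Suc (Suc n)) m"
  by (auto simp: Cset_def in_dim_def)

lemma Pseq_sub:
  assumes "\<And>i. 0 \<le> l i" and "\<And>i. real_of_int (l i) \<le> m"
  shows "Pseq l i \<subseteq> Cset (Suc i) m"
proof (induction i)
  case 0
  show ?case
  proof
    fix x assume "x \<in> Pseq l 0"
    hence x: "0 \<le> x 0" "x 0 \<le> l 0" "in_dim 1 x" by (auto simp: seg_def)
    have "\<forall>k. 0 \<le> x k"
    proof
      fix k show "0 \<le> x k" using x by (cases k) (auto simp: in_dim_def)
    qed
    thus "x \<in> Cset (Suc 0) m" using x assms(2)[of 0] by (auto simp: Cset_def)
  qed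
next
  case (Suc i)
  have "shift (Suc i) ` seg (l (Suc i)) \<subseteq> Cset (Suc (Suc i)) m"
  proof
    fix z assume "z \<in> shift (Suc i) ` seg (l (Suc i))"
    then obtain x where xs: "x \<in> seg (l (Suc i))"
      and z: "z = shift (Suc i) x" by blast
    from xs have x: "0 \<le> x 0" "x 0 \<le> l (Suc i)" "in_dim 1 x" by (auto simp: seg_def)
    have x0: "\<And>k. 0 \<le> x k" using x by (metis in_dim_def le_numeral_extra(4) order_refl not_gr0 less_one linorder_not_less)
    have "in_dim (Suc (Suc i)) z" using x(3) by (auto simp: z shift_def in_dim_def)
    moreover have "\<forall>k. 0 \<le> z k" using x0 by (auto simp: z shift_def)
    moreover have "(\<Sum>k<Suc (Suc i). z k) = x 0" by (simp add: z shift_def)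
    ultimately show "z \<in> Cset (Suc (Suc i)) m" using x(2) assms(2)[of "Suc i"]
      by (auto simp: Cset_def)
  qed
  then show ?case using Suc.IH Cset_mono
    by (simp add: dsum_def) (intro conv_sub, blast)
qed

definition Lset :: "nat \<Rightarrow> nat \<Rightarrow> nat list set" where
  "Lset n M = {xs. length xs = n \<and> sum_list xs \<le> M}"

lemma Lset_finite: "finite (Lset n M)"
proof -
  have "Lset n M \<subseteq> {xs. set xs \<subseteq> {0..M} \<and> length xs = n}"
    by (auto simp: Lset_def dest: member_le_sum_list)
  thus ?thesis using finite_lists_length_eq[of "{0..M}" n] finite_subset by blast
qed

lemma geo_bound: "(\<Sum>i<Suc M. (a::nat) ^ i) \<le> (a + 1) ^ M"
proof (induction M)
  case 0 then show ?case by simp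
next
  case (Suc M)
  have "(\<Sum>i<Suc (Suc M). a ^ i) = 1 + a * (\<Sum>i<Suc M. a ^ i)"
    by (simp only: sum.lessThan_Suc_shift power_0 power_Suc sum_distrib_left distrib_left mult_1_right)
  also have "\<dots> \<le> 1 + a * (a+1)^M" using Suc by simp
  also have "\<dots> \<le> (a+1)^M + a * (a+1)^M" by simp
  finally show ?case by simp
qed

lemma Lset_card: "card (Lset n M) \<le> (n + 1) ^ M"
proof (induction n arbitrary: M)
  case 0
  have "Lset 0 M = {[]}" by (auto simp: Lset_def)
  then show ?case by simp
next
  case (Suc n)
  have eq: "Lset (Suc n) M = (\<lambda>(j, xs). j # xs) ` (SIGMA j:{..<Suc M}. Lset n (M - j))"
  proof
    show "Lset (Suc n) M \<subseteq> (\<lambda>(j, xs). j # xs) ` (SIGMA j:{..<Suc M}. Lset n (M - j))"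
    proof
      fix ys assume "ys \<in> Lset (Suc n) M"
      then obtain j xs where "ys = j # xs" "length xs = n" "j + sum_list xs \<le> M"
        by (cases ys) (auto simp: Lset_def)
      thus "ys \<in> (\<lambda>(j, xs). j # xs) ` (SIGMA j:{..<Suc M}. Lset n (M - j))"
        by (auto simp: Lset_def intro!: image_eqI[of _ _ "(j, xs)"])
    qed
  qed (auto simp: Lset_def)
  have "card (Lset (Suc n) M) \<le> card (SIGMA j:{..<Suc M}. Lset n (M - j))"
    unfolding eq by (rule card_image_le) (auto simp: Lset_finite)
  also have "\<dots> = (\<Sum>j<Suc M. card (Lset n (M - j)))"
    by (simp add: card_SigmaI Lset_finite)
  also have "\<dots> \<le> (\<Sum>j<Suc M. (n+1) ^ (M - j))"
    by (intro sum_mono Suc.IH)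
  also have "\<dots> = (\<Sum>j<Suc M. (n+1) ^ j)"
    using sum.nat_diff_reindex[of "\<lambda>j. (n+1)^j" "Suc M"] by simp
  also have "\<dots> \<le> (Suc n + 1) ^ M" using geo_bound[where M=M and a="n+1"] by simp
  finally show ?case .
qed

lemma lattice_card:
  "finite (lattice_points n (Cset n (real M))) \<and> card (lattice_points n (Cset n (real M))) \<le> (n + 1) ^ M"
proof -
  let ?A = "lattice_points n (Cset n (real M))"
  let ?f = "\<lambda>x. map (\<lambda>k. nat \<lfloor>x k\<rfloor>) [0..<n]"
  have rep: "x k = real (nat \<lfloor>x k\<rfloor>)" if "x \<in> ?A" "k < n" for x k
  proof -
    from that have "x k \<in> \<int>" "0 \<le> x k" by (auto simp: lattice_points_def Cset_def)
    thus ?thesis by (metis Ints_cases floor_of_int of_int_0_le_iff of_nat_nat)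
  qed
  have "inj_on ?f ?A"
  proof
    fix x y assume xy: "x \<in> ?A" "y \<in> ?A" "?f x = ?f y"
    show "x = y"
    proof
      fix k show "x k = y k"
      proof (cases "k < n")
        case True
        from xy(3) have "nat \<lfloor>x k\<rfloor> = nat \<lfloor>y k\<rfloor>"
          using True by (metis (no_types, lifting) add_0 diff_zero length_map length_upt nth_map nth_upt)
        then show ?thesis using rep[OF xy(1) True] rep[OF xy(2) True] by simp
      next
        case False
        then show ?thesis using xy by (auto simp: lattice_points_def in_dim_def)
      qed
    qed
  qed
  moreover have "?f ` ?A \<subseteq> Lset n M"
  proof
    fix ys assume "ys \<in> ?f ` ?A"
    then obtain x where x: "x \<in> ?A" and ys: "ys = ?f x" by blast
    have "real (sum_list ys) = (\<Sum>k<n. real (nat \<lfloor>x k\<rfloor>))"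
      by (simp add: ys sum_list_sum_nth atLeast0LessThan)
    also have "\<dots> = (\<Sum>k<n. x k)" using rep[OF x] by simp
    also have "\<dots> \<le> real M" using x by (auto simp: lattice_points_def Cset_def)
    finally show "ys \<in> Lset n M" by (simp add: Lset_def ys)
  qed
  ultimately have "card ?A \<le> card (Lset n M)" "finite ?A"
    by (auto intro!: card_inj_on_le simp: Lset_finite)
       (meson Lset_finite finite_imageD finite_subset)
  thus ?thesis using Lset_card[of n M] by simp
qed

theorem mainTheorem9:
  fixes q :: nat and l :: "nat \<Rightarrow> int"
  assumes "primepow q" and "q \<ge> 3"
    and "\<And>i. 0 \<le> l i" and "\<And>i. l i \<le> int q - 2"
  shows "(\<lambda>i. Rval q (Suc i) (Pseq l i)) \<longlonglongrightarrow> 0"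
proof -
  define M where "M = q - 2"
  have lM: "real_of_int (l i) \<le> real M" for i
    using assms(2) assms(4)[of i] by (simp add: M_def of_nat_diff)
  have fin: "finite (lattice_points (Suc i) (Cset (Suc i) (real M)))" for i
    using lattice_card by blast
  have bnd: "Rval q (Suc i) (Pseq l i) \<le> (real i + 2) ^ M / 2 ^ Suc i" for i
  proof -
    have sub: "lattice_points (Suc i) (Pseq l i) \<subseteq> lattice_points (Suc i) (Cset (Suc i) (real M))"
      using Pseq_sub[where l=l and m="real M" and i=i, OF assms(3) lM] by (auto simp: lattice_points_def)
    have "card (lattice_points (Suc i) (Pseq l i)) \<le> (i + 2) ^ M"
      using card_mono[OF fin sub] lattice_card[of "Suc i" M] by simp
    hence c: "real (card (lattice_points (Suc i) (Pseq l i))) \<le> (real i + 2) ^ M"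
      by (metis of_nat_le_iff of_nat_numeral of_nat_add of_nat_power)
    have q2: "2 \<le> real q - 1" using assms(2) by simp
    have "Rval q (Suc i) (Pseq l i) \<le> (real i + 2) ^ M / (real q - 1) ^ Suc i"
      unfolding Rval_def using q2 c by (intro divide_right_mono) auto
    also have "\<dots> \<le> (real i + 2) ^ M / 2 ^ Suc i"
      using q2 by (intro divide_left_mono power_mono) auto
    finally show ?thesis .
  qed
  have lim: "(\<lambda>i::nat. (real i + 2) ^ M / 2 ^ (Suc i)) \<longlonglongrightarrow> 0"
    by real_asymp
  show ?thesis
  proof (rule tendsto_sandwich[OF _ _ tendsto_const lim])
    show "\<forall>\<^sub>F i in sequentially. 0 \<le> Rval q (Suc i) (Pseq l i)"
      using assms(2) by (auto simp: Rval_def)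
    show "\<forall>\<^sub>F i in sequentially. Rval q (Suc i) (Pseq l i) \<le> (real i + 2) ^ M / 2 ^ Suc i"
      using bnd by simp
  qed
qed

end
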